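(* Let $\bar x$ be a sparsest solution of problem (P), and let $\tilde X$ be an optimal solution of the QBP program for some $\lambda\ge0$. Suppose that: - $\operatorname{rank}(\tilde X)=1$; - $B$ is $(\epsilon,2\|\tilde X\|_0)$-RIP for some $\epsilon<1$. Then $\tilde X=\begin{bmatrix}1\\ \bar x\end{bmatrix}\begin{bmatrix}1 & \bar x^H\end{bmatrix}$.
   Context: Fix integers $n,N\ge 1$ and data $a_i\in\mathbb{C}$, $b_i,c_i\in\mathbb{C}^n$, $Q_i\in\mathbb{C}^{n\times n}$, $y_i\in\mathbb{C}$ for $i=1,\dots,N$. Problem (P) is $$\min_{x\in\mathbb{C}^n}\|x\|_0\quad\text{subject to}\quad y_i=a_i+b_i^H x+x^H c_i+x^H Q_i x,\quad i=1,\dots,N.$$ Here $\|\cdot\|_0$ counts nonzero entries of a vector or matrix, and ${}^H$ denotes conjugate transpose. Let $\Phi_i=\begin{bmatrix} a_i & b_i^H\\ c_i & Q_i\end{bmatrix}\in\mathbb{C}^{(n+1)\times(n+1)}$. Define the linear operator $B:\mathbb{C}^{(n+1)\times(n+1)}\to\mathbb{C}^N$ by $B(X)=(\operatorname{tr}(\Phi_i X))_{i=1}^N$. The QBP program with parameter $\lambda\ge0$ is $$\min_{X}\ \operatorname{tr}(X)+\lambda\|X\|_1\quad\text{subject to}\quad y_i=\operatorname{tr}(\Phi_i X)\ (i=1,\dots,N),\quad X_{1,1}=1,\quad X\succeq0,$$ where $X$ ranges over Hermitian $(n+1)\times(n+1)$ matrices and $\|X\|_1$ is the sum of the absolute values of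 the entries. $B$ is called $(\epsilon,k)$-RIP if $\left|\frac{\|B(X)\|^2}{\|X\|^2}-1\right|<\epsilon$ for every nonzero $X$ with $\|X\|_0\le k$. In this condition $\|B(X)\|$ is the Euclidean norm in $\mathbb{C}^N$ and $\|X\|$ is the spectral norm. *)

theory Defs
  imports "Jordan_Normal_Form.DL_Rank" "Jordan_Normal_Form.Matrix"
begin

text \<open>Indices are 0-based; the paper's index 1 of a matrix
  is index 0 here. The constraints are indexed by i < N (paper: i = 1..N).\<close>

definition vzero_norm :: "complex vec \<Rightarrow> nat" where
  "vzero_norm x = card {j. j < dim_vec x \<and> x $ j \<noteq> 0}"

definition mzero_norm :: "complex mat \<Rightarrow> nat" where
  "mzero_norm X = card {(j, k). j < dim_row X \<and> k < dim_col X \<and> X $$ (j, k) \<noteq> 0}"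

definition mone_norm :: "complex mat \<Rightarrow> real" where
  "mone_norm X = (\<Sum>j<dim_row X. \<Sum>k<dim_col X. cmod (X $$ (j, k)))"

definition vec_norm2 :: "complex vec \<Rightarrow> real" where
  "vec_norm2 v = sqrt (\<Sum>j<dim_vec v. (cmod (v $ j))\<^sup>2)"

definition spectral_norm :: "complex mat \<Rightarrow> real" where
  "spectral_norm X = Sup {vec_norm2 (X *\<^sub>v v) | v. v \<in> carrier_vec (dim_col X) \<and> vec_norm2 v = 1}"

definition hermitian_mat :: "complex mat \<Rightarrow> bool" where
  "hermitian_mat X \<longleftrightarrow> dim_row X = dim_col X \<and>
     (\<forall>j < dim_row X. \<forall>k < dim_col X. X $$ (j, k) = cnj (X $$ (k, j)))"

definition psd_mat :: "complex mat \<Rightarrow> bool" where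
  "psd_mat X \<longleftrightarrow> hermitian_mat X \<and>
     (\<forall>v \<in> carrier_vec (dim_row X). Re (conjugate v \<bullet> (X *\<^sub>v v)) \<ge> 0)"

definition mat_trace :: "complex mat \<Rightarrow> complex" where
  "mat_trace X = (\<Sum>j<dim_row X. X $$ (j, j))"

definition hprod :: "complex vec \<Rightarrow> complex vec \<Rightarrow> complex" where
  "hprod u v = conjugate u \<bullet> v"

text \<open>Phi_i = [a_i, b_i^H; c_i, Q_i], of size (n+1) x (n+1).\<close>
definition Phi :: "nat \<Rightarrow> complex \<Rightarrow> complex vec \<Rightarrow> complex vec \<Rightarrow> complex mat \<Rightarrow> complex mat" where
  "Phi n a b c Q = mat (n+1) (n+1) (\<lambda>(j, k).
      if j = 0 \<and> k = 0 then a
      else if j = 0 then cnj (b $ (k - 1))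
      else if k = 0 then c $ (j - 1)
      else Q $$ (j - 1, k - 1))"

definition P_feasible :: "nat \<Rightarrow> nat \<Rightarrow> (nat \<Rightarrow> complex) \<Rightarrow> (nat \<Rightarrow> complex vec) \<Rightarrow>
    (nat \<Rightarrow> complex vec) \<Rightarrow> (nat \<Rightarrow> complex mat) \<Rightarrow> (nat \<Rightarrow> complex) \<Rightarrow> complex vec \<Rightarrow> bool" where
  "P_feasible n N a b c Q y x \<longleftrightarrow> x \<in> carrier_vec n \<and>
     (\<forall>i < N. y i = a i + hprod (b i) x + hprod x (c i) + hprod x (Q i *\<^sub>v x))"

definition sparsest_solution where
  "sparsest_solution n N a b c Q y x \<longleftrightarrow> P_feasible n N a b c Q y x \<and>
     (\<forall>x'. P_feasible n N a b c Q y x' \<longrightarrow> vzero_norm x \<le> vzero_norm x')"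

definition QBP_feasible where
  "QBP_feasible n N a b c Q y X \<longleftrightarrow> X \<in> carrier_mat (n+1) (n+1) \<and> hermitian_mat X \<and>
     (\<forall>i < N. y i = mat_trace (Phi n (a i) (b i) (c i) (Q i) * X)) \<and>
     X $$ (0, 0) = 1 \<and> psd_mat X"

definition QBP_objective :: "real \<Rightarrow> complex mat \<Rightarrow> real" where
  "QBP_objective lam X = Re (mat_trace X) + lam * mone_norm X"

definition QBP_optimal where
  "QBP_optimal n N a b c Q y lam X \<longleftrightarrow> QBP_feasible n N a b c Q y X \<and>
     (\<forall>X'. QBP_feasible n N a b c Q y X' \<longrightarrow> QBP_objective lam X \<le> QBP_objective lam X')"

definition B_norm where
  "B_norm n N a b c Q X = sqrt (\<Sum>i<N. (cmod (mat_trace (Phi n (a i) (b i) (c i) (Q i) * X)))\<^sup>2)"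

definition RIP where
  "RIP n N a b c Q \<epsilon> k \<longleftrightarrow>
     (\<forall>X \<in> carrier_mat (n+1) (n+1). X \<noteq> 0\<^sub>m (n+1) (n+1) \<and> mzero_norm X \<le> k \<longrightarrow>
        \<bar>(B_norm n N a b c Q X)\<^sup>2 / (spectral_norm X)\<^sup>2 - 1\<bar> < \<epsilon>)"

definition lift_outer :: "complex vec \<Rightarrow> complex mat" where
  "lift_outer x = (let u = vCons 1 x in
     mat (dim_vec u) (dim_vec u) (\<lambda>(j, k). u $ j * cnj (u $ k)))"

end

theory Submission
  imports Defs
begin


lemma rank1_entries:
  fixes X :: "complex mat"
  assumes X: "X \<in> carrier_mat m m" and r: "vec_space.rank m X = 1" and X00: "X $$ (0,0) = 1"
    and j: "j < m" and k: "k < m"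
  shows "X $$ (j,k) = X $$ (j,0) * X $$ (0,k)"
proof (rule ccontr)
  assume ne: "X $$ (j,k) \<noteq> X $$ (j,0) * X $$ (0,k)"
  have m0: "0 < m" using j by auto
  define u where "u = col X 0"
  define w where "w = col X k"
  have uw: "u \<noteq> w"
  proof
    assume "u = w"
    then have "X $$ (j,0) = X $$ (j,k)" "X $$ (0,0) = X $$ (0,k)"
      using X j k m0 unfolding u_def w_def by (metis carrier_matD(1) col_def index_vec)+
    then show False using ne X00 by simp
  qed
  define A where "A = mat_of_cols m [u, w]"
  have uc: "u \<in> carrier_vec m" "w \<in> carrier_vec m" using X m0 k unfolding u_def w_def by auto
  have Ac: "A \<in> carrier_mat m 2" unfolding A_def using uc by auto
  have dist: "distinct (cols A)" unfolding A_def using uc uw by simp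
  have indpt: "\<not> module.lin_dep class_ring (module_vec TYPE(complex) m) (set (cols A))"
  proof
    assume "module.lin_dep class_ring (module_vec TYPE(complex) m) (set (cols A))"
    then obtain v where v: "v \<in> carrier_vec 2" "v \<noteq> 0\<^sub>v 2" "A *\<^sub>v v = 0\<^sub>v m"
      using vec_space.lin_depE[OF Ac _ dist] by blast
    have e: "i < m \<Longrightarrow> u $ i * v $ 0 + w $ i * v $ 1 = 0" for i
    proof -
      assume i: "i < m"
      have "(A *\<^sub>v v) $ i = 0" using v i by simp
      moreover have "(A *\<^sub>v v) $ i = row A i \<bullet> v" using Ac i by simp
      moreover have "row A i \<bullet> v = A $$ (i,0) * v $ 0 + A $$ (i,1) * v $ 1"
        using Ac i v(1) unfolding scalar_prod_def by (simp add: numeral_2_eq_2)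
      moreover have "A $$ (i,0) = u $ i" "A $$ (i,1) = w $ i" unfolding A_def using i uc
        by (simp_all add: mat_of_cols_index)
      ultimately show ?thesis by simp
    qed
    have u0: "u $ 0 = 1" "w $ 0 = X $$ (0,k)" "u $ j = X $$ (j,0)" "w $ j = X $$ (j,k)"
      using X m0 j k X00 unfolding u_def w_def by auto
    have e0: "v $ 0 + X $$ (0,k) * v $ 1 = 0" using e[OF m0] u0 by simp
    have ej: "X $$ (j,0) * v $ 0 + X $$ (j,k) * v $ 1 = 0" using e[OF j] u0 by simp
    have "v $ 0 = - X $$ (0,k) * v $ 1" using e0 by (simp add: eq_neg_iff_add_eq_0 algebra_simps)
    with ej have "(X $$ (j,k) - X $$ (j,0) * X $$ (0,k)) * v $ 1 = 0" by (simp add: algebra_simps)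
    with ne have v1: "v $ 1 = 0" by simp
    with e0 have v0: "v $ 0 = 0" by simp
    have "v = 0\<^sub>v 2"
      apply (rule eq_vecI) using v(1) v0 v1 by (auto simp: less_2_cases_iff)
    with v(2) show False by simp
  qed
  have sub: "set (cols A) \<subseteq> set (cols X)" unfolding A_def using uc X m0 k
    by (auto simp: u_def w_def cols_def)
  have "card (set (cols A)) \<le> vec_space.rank m X"
    using vec_space.rank_ge_card_indpt[OF X sub indpt] .
  moreover have "card (set (cols A)) = 2" unfolding A_def using uc uw by simp
  ultimately show False using r by simp
qed


lemma lift_idx:
  assumes x: "x \<in> carrier_vec n" and "j < n+1" "k < n+1"
  shows "lift_outer x $$ (j,k) = vCons 1 x $ j * cnj (vCons 1 x $ k)"
  using assms by (simp add: lift_outer_def Let_def)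

lemma lift_carrier: "x \<in> carrier_vec n \<Longrightarrow> lift_outer x \<in> carrier_mat (n+1) (n+1)"
  by (simp add: lift_outer_def Let_def)

lemma trace_lift:
  assumes x: "x \<in> carrier_vec n" and b: "b \<in> carrier_vec n" and c: "c \<in> carrier_vec n"
    and Q: "Q \<in> carrier_mat n n"
  shows "mat_trace (Phi n a b c Q * lift_outer x) = a + hprod b x + hprod x c + hprod x (Q *\<^sub>v x)"
proof -
  let ?u = "vCons 1 x"
  have "mat_trace (Phi n a b c Q * lift_outer x) =
     (\<Sum>j<n+1. \<Sum>k<n+1. Phi n a b c Q $$ (j,k) * (?u $ k * cnj (?u $ j)))"
    unfolding mat_trace_def using x lift_carrier[OF x]
    by (auto simp: Phi_def scalar_prod_def lift_idx atLeast0LessThan intro!: sum.cong)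
  also have "\<dots> = a + (\<Sum>k<n. cnj (b $ k) * x $ k) + (\<Sum>j<n. c $ j * cnj (x $ j))
       + (\<Sum>j<n. \<Sum>k<n. Q $$ (j,k) * (x $ k * cnj (x $ j)))"
    unfolding Suc_eq_plus1[symmetric] sum.lessThan_Suc_shift
    by (simp add: Phi_def sum.distrib algebra_simps)
  also have "\<dots> = a + hprod b x + hprod x c + hprod x (Q *\<^sub>v x)"
    using x b c Q
    by (simp add: hprod_def scalar_prod_def atLeast0LessThan sum_distrib_left algebra_simps)
  finally show ?thesis .
qed


lemma mzero_lift:
  assumes x: "x \<in> carrier_vec n"
  shows "mzero_norm (lift_outer x) = (Suc (vzero_norm x))^2"
proof -
  let ?u = "vCons 1 x"
  define S where "S = {j. j < n+1 \<and> ?u $ j \<noteq> 0}"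
  have "{(j, k). j < dim_row (lift_outer x) \<and> k < dim_col (lift_outer x) \<and> lift_outer x $$ (j, k) \<noteq> 0} = S \<times> S"
    using x lift_carrier[OF x] by (auto simp: S_def lift_idx)
  moreover have "S = insert 0 (Suc ` {j. j < n \<and> x $ j \<noteq> 0})"
    using x unfolding S_def by (auto simp: vCons_def image_iff split: nat.splits)
  then have "card S = Suc (vzero_norm x)" using x
    by (simp add: vzero_norm_def card_image)
  ultimately show ?thesis unfolding mzero_norm_def by (simp add: card_cartesian_product power2_eq_square)
qed

lemma mzero_diff:
  assumes "A \<in> carrier_mat m m" "B \<in> carrier_mat m m"
  shows "mzero_norm (A - B) \<le> mzero_norm A + mzero_norm B"
proof -
  let ?s = "\<lambda>X. {(j, k). j < m \<and> k < m \<and> X $$ (j, k) \<noteq> 0}"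
  have "?s (A - B) \<subseteq> ?s A \<union> ?s B" using assms by auto
  then have "card (?s (A - B)) \<le> card (?s A \<union> ?s B)"
    by (rule card_mono[rotated]) (rule finite_subset[of _ "{..<m} \<times> {..<m}"], auto)
  also have "\<dots> \<le> card (?s A) + card (?s B)" by (rule card_Un_le)
  finally show ?thesis unfolding mzero_norm_def using assms by simp
qed


lemma trace_minus: "A \<in> carrier_mat m m \<Longrightarrow> B \<in> carrier_mat m m \<Longrightarrow> mat_trace (A - B) = mat_trace A - mat_trace B"
  unfolding mat_trace_def by (simp add: sum_subtractf)

theorem mainTheorem3:
  fixes n N :: nat
    and a :: "nat \<Rightarrow> complex" and b c :: "nat \<Rightarrow> complex vec"
    and Q :: "nat \<Rightarrow> complex mat" and y :: "nat \<Rightarrow> complex"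
    and xbar :: "complex vec" and Xt :: "complex mat" and lam \<epsilon> :: real
  assumes "n \<ge> 1" and "N \<ge> 1"
    and "\<And>i. i < N \<Longrightarrow> b i \<in> carrier_vec n"
    and "\<And>i. i < N \<Longrightarrow> c i \<in> carrier_vec n"
    and "\<And>i. i < N \<Longrightarrow> Q i \<in> carrier_mat n n"
    and "sparsest_solution n N a b c Q y xbar"
    and "lam \<ge> 0"
    and "QBP_optimal n N a b c Q y lam Xt"
    and "vec_space.rank (n+1) Xt = 1"
    and "\<epsilon> < 1"
    and "RIP n N a b c Q \<epsilon> (2 * mzero_norm Xt)"
  shows "Xt = lift_outer xbar"
proof -
  note bc = assms(3) assms(4) assms(5)
  have feas: "QBP_feasible n N a b c Q y Xt" using assms(8) unfolding QBP_optimal_def by blast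
  then have Xc: "Xt \<in> carrier_mat (n+1) (n+1)" and herm: "hermitian_mat Xt"
    and Xy: "\<And>i. i < N \<Longrightarrow> y i = mat_trace (Phi n (a i) (b i) (c i) (Q i) * Xt)"
    and X00: "Xt $$ (0,0) = 1"
    unfolding QBP_feasible_def by auto
  define xt where "xt = vec n (\<lambda>j. Xt $$ (Suc j, 0))"
  have xtc: "xt \<in> carrier_vec n" unfolding xt_def by simp
  have ucol: "j < n+1 \<Longrightarrow> vCons 1 xt $ j = Xt $$ (j,0)" for j
    using X00 unfolding xt_def by (cases j) auto
  have XL: "Xt = lift_outer xt"
  proof (rule eq_matI)
    fix j k assume jk: "j < dim_row (lift_outer xt)" "k < dim_col (lift_outer xt)"
    then have j: "j < n+1" and k: "k < n+1" using xtc by (simp_all add: lift_outer_def Let_def)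
    have "Xt $$ (j,k) = Xt $$ (j,0) * Xt $$ (0,k)"
      using rank1_entries[OF Xc assms(9) X00 j k] .
    also have "Xt $$ (0,k) = cnj (Xt $$ (k,0))"
    proof -
      have "0 < dim_row Xt" "k < dim_col Xt" using Xc k by auto
      then show ?thesis using herm unfolding hermitian_mat_def by blast
    qed
    finally show "Xt $$ (j,k) = lift_outer xt $$ (j,k)"
      using lift_idx[OF xtc j k] ucol[OF j] ucol[OF k] by simp
  qed (use Xc lift_carrier[OF xtc] in auto)
  have "P_feasible n N a b c Q y xt"
    unfolding P_feasible_def
  proof (intro conjI allI impI)
    fix i assume i: "i < N"
    show "y i = a i + hprod (b i) xt + hprod xt (c i) + hprod xt (Q i *\<^sub>v xt)"
      using Xy[OF i] trace_lift[OF xtc bc[OF i]] XL by simp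
  qed (rule xtc)
  then have vle: "vzero_norm xbar \<le> vzero_norm xt"
    using assms(6) unfolding sparsest_solution_def by blast
  have xbc: "xbar \<in> carrier_vec n" and xby: "\<And>i. i < N \<Longrightarrow> y i = a i + hprod (b i) xbar + hprod xbar (c i) + hprod xbar (Q i *\<^sub>v xbar)"
    using assms(6) unfolding sparsest_solution_def P_feasible_def by auto
  define Xb where "Xb = lift_outer xbar"
  have Xbc: "Xb \<in> carrier_mat (n+1) (n+1)" using lift_carrier[OF xbc] Xb_def by simp
  have mle: "mzero_norm Xb \<le> mzero_norm Xt"
    unfolding Xb_def XL mzero_lift[OF xbc] mzero_lift[OF xtc] using vle by (simp add: power_mono)
  define D where "D = Xb - Xt"
  have Dc: "D \<in> carrier_mat (n+1) (n+1)" unfolding D_def using Xbc Xc by (simp add: minus_carrier_mat)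
  have Bz: "mat_trace (Phi n (a i) (b i) (c i) (Q i) * D) = 0" if i: "i < N" for i
  proof -
    have Pc: "Phi n (a i) (b i) (c i) (Q i) \<in> carrier_mat (n+1) (n+1)" by (simp add: Phi_def)
    have "Phi n (a i) (b i) (c i) (Q i) * D = Phi n (a i) (b i) (c i) (Q i) * Xb - Phi n (a i) (b i) (c i) (Q i) * Xt"
      unfolding D_def using mult_minus_distrib_mat[OF Pc Xbc Xc] .
    moreover have "mat_trace (Phi n (a i) (b i) (c i) (Q i) * Xb) = y i"
      unfolding Xb_def using trace_lift[OF xbc bc[OF i]] xby[OF i] by simp
    ultimately show ?thesis using Xy[OF i] trace_minus[of _ "n+1"] Pc Xbc Xc by simp
  qed
  have BD: "B_norm n N a b c Q D = 0" unfolding B_norm_def using Bz by simp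
  show ?thesis
  proof (rule ccontr)
    assume "Xt \<noteq> lift_outer xbar"
    have "D \<noteq> 0\<^sub>m (n+1) (n+1)"
    proof
      assume D0: "D = 0\<^sub>m (n+1) (n+1)"
      have "Xb = Xt"
      proof (rule eq_matI)
        fix j k assume jk: "j < dim_row Xt" "k < dim_col Xt"
        have "(Xb - Xt) $$ (j,k) = Xb $$ (j,k) - Xt $$ (j,k)" using Xc Xbc jk by simp
        moreover have "(Xb - Xt) $$ (j,k) = 0" using D0[unfolded D_def] jk Xc by simp
        ultimately show "Xb $$ (j,k) = Xt $$ (j,k)" by simp
      qed (use Xc Xbc in auto)
      then show False using \<open>Xt \<noteq> lift_outer xbar\<close> Xb_def by simp
    qed
    moreover have "mzero_norm D \<le> 2 * mzero_norm Xt"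
      using mzero_diff[OF Xbc Xc] mle D_def by simp
    ultimately have "\<bar>(B_norm n N a b c Q D)\<^sup>2 / (spectral_norm D)\<^sup>2 - 1\<bar> < \<epsilon>"
      using assms(11) Dc unfolding RIP_def by blast
    then show False using BD assms(10) by simp
  qed
qed

end
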